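(* If $k \geq 9$ and $|q - q_k| < q_k^{-2k-6}$, then $d_{\mathrm{H}}(\pi_q(S_{k-1}), \pi_{q_k}(S_{k-1})) < q_k^{-2k-4}$.
   Context: $q_k$ is the unique root in $(1,2)$ of $x^k - x^{k-1} - \cdots - x - 1 = 0$. $\pi_q((\epsilon_j)_{j\ge1}) = \sum_{j\ge1}\epsilon_j q^{-j}$. $S_{k-1}$ is the set of $(\epsilon_j) \in \{0,1\}^\mathbb{N}$ containing no block of consecutive entries equal to $01^{k-1}$ or $10^{k-1}$. $d_{\mathrm{H}}(X,Y) = \max\{\sup_{x\in X}d(x,Y),\sup_{y\in Y}d(y,X)\}$ is the Hausdorff distance. *)

theory Defs
  imports "HOL-Analysis.Analysis"
begin

definition qk :: "nat \<Rightarrow> real" where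
  "qk k = (THE x. 1 < x \<and> x < 2 \<and> x ^ k - (\<Sum>i<k. x ^ i) = 0)"

text \<open>0-1 sequences (eps_j)_{j>=1} are represented as functions nat => bool,
  where position j (0-based) holds eps_(j+1); True means 1, False means 0.\<close>
definition proj :: "real \<Rightarrow> (nat \<Rightarrow> bool) \<Rightarrow> real" where
  "proj q e = (\<Sum>j. (if e j then 1 else 0) / q ^ (Suc j))"

definition Sset :: "nat \<Rightarrow> (nat \<Rightarrow> bool) set" where
  "Sset m = {e. \<not> (\<exists>n. \<not> e n \<and> (\<forall>i\<in>{1..m}. e (n + i)))
              \<and> \<not> (\<exists>n. e n \<and> (\<forall>i\<in>{1..m}. \<not> e (n + i)))}"

definition hausdorff_dist :: "'a::metric_space set \<Rightarrow> 'a set \<Rightarrow> real" where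
  "hausdorff_dist X Y = max (SUP x\<in>X. infdist x Y) (SUP y\<in>Y. infdist y X)"

end

theory Submission
  imports Defs
begin

lemma geo_sums: assumes "1 < (q::real)" shows "(\<lambda>j. 1 / q ^ Suc j) sums (1/(q-1))"
proof -
  have n: "norm (1/q) < 1" using assms by simp
  have "(\<lambda>n. (1/q) * (1/q)^n) sums ((1/q) * (1/(1 - 1/q)))"
    using sums_mult[OF geometric_sums[OF n]] by blast
  moreover have "(1/q) * (1/(1 - 1/q)) = 1/(q-1)" using assms by (simp add: field_simps)
  moreover have "\<And>n. (1/q) * (1/q)^n = 1 / q ^ Suc n" by (simp add: power_divide)
  ultimately show ?thesis by simp
qed

lemma proj_diff:
  assumes "1 < (q::real)" "q \<le> p"
  shows "\<bar>proj q e - proj p e\<bar> \<le> 1/(q-1) - 1/(p-1)"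
proof -
  define c where "c j = (if e j then 1 else (0::real))" for j
  define a where "a j = 1 / q ^ Suc j" for j
  define b where "b j = 1 / p ^ Suc j" for j
  have p1: "1 < p" using assms by simp
  have sa: "a sums (1/(q-1))" unfolding a_def using geo_sums[OF assms(1)] .
  have sb: "b sums (1/(p-1))" unfolding b_def using geo_sums[OF p1] .
  have c01: "0 \<le> c j \<and> c j \<le> 1" for j by (simp add: c_def)
  have a0: "0 \<le> a j" for j using assms by (simp add: a_def)
  have b0: "0 \<le> b j" for j using p1 by (simp add: b_def)
  have ba: "b j \<le> a j" for j unfolding a_def b_def
    using assms by (intro divide_left_mono power_mono mult_pos_pos) auto
  have sf: "summable (\<lambda>j. c j * a j)"
    by (rule summable_comparison_test'[OF sums_summable[OF sa]])
       (use c01 a0 in \<open>auto intro: mult_left_le_one_le simp: mult_nonneg_nonneg\<close>)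
  have sg: "summable (\<lambda>j. c j * b j)"
    by (rule summable_comparison_test'[OF sums_summable[OF sb]])
       (use c01 b0 in \<open>auto intro: mult_left_le_one_le simp: mult_nonneg_nonneg\<close>)
  have pq: "proj q e = (\<Sum>j. c j * a j)" "proj p e = (\<Sum>j. c j * b j)"
    unfolding proj_def c_def a_def b_def by (auto intro!: suminf_cong)
  have d: "proj q e - proj p e = (\<Sum>j. c j * a j - c j * b j)"
    unfolding pq using suminf_diff[OF sf sg] by simp
  have sab: "(\<lambda>j. a j - b j) sums (1/(q-1) - 1/(p-1))" using sums_diff[OF sa sb] .
  have lo: "0 \<le> (\<Sum>j. c j * a j - c j * b j)"
    apply (rule suminf_nonneg)
    using summable_diff[OF sf sg] apply simp
    using c01 ba by (simp add: mult_left_mono)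
  have hi: "(\<Sum>j. c j * a j - c j * b j) \<le> (\<Sum>j. a j - b j)"
    apply (rule suminf_le)
    subgoal for j using c01[of j] ba[of j]
      by (metis diff_ge_0_iff_ge mult.commute mult_left_le_one_le right_diff_distrib')
    using summable_diff[OF sf sg] apply simp
    using sums_summable[OF sab] by simp
  show ?thesis using d lo hi sums_unique[OF sab] by simp
qed


lemma root_form:
  assumes "0 < (x::real)" "1 \<le> k"
  shows "(x ^ k - (\<Sum>i<k. x ^ i) = 0) \<longleftrightarrow> (\<Sum>i<k. 1 / x ^ (k - i)) = 1"
proof -
  have "(\<Sum>i<k. 1 / x ^ (k - i)) = (\<Sum>i<k. x ^ i) / x ^ k"
    unfolding sum_divide_distrib
    by (rule sum.cong) (use assms in \<open>auto simp: power_diff\<close>)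
  then have e: "x ^ k * (\<Sum>i<k. 1 / x ^ (k - i)) = (\<Sum>i<k. x ^ i)"
    using assms by simp
  have "x ^ k \<noteq> 0" using assms by simp
  then have "((\<Sum>i<k. 1 / x ^ (k - i)) = 1) \<longleftrightarrow> x ^ k * (\<Sum>i<k. 1 / x ^ (k - i)) = x ^ k * 1"
    by (simp only: mult_cancel_left) simp
  then show ?thesis using e by auto
qed

lemma root_uniq:
  assumes "0 < (x::real)" "x < y" "1 \<le> k"
    and "x ^ k - (\<Sum>i<k. x ^ i) = 0" "y ^ k - (\<Sum>i<k. y ^ i) = 0"
  shows False
proof -
  have "(\<Sum>i<k. 1 / y ^ (k - i)) < (\<Sum>i<k. 1 / x ^ (k - i))"
    apply (rule sum_strict_mono)
    using assms apply auto
    by (intro divide_strict_left_mono power_strict_mono) auto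
  then show False using root_form[of x k] root_form[of y k] assms by simp
qed

lemma qk_bounds:
  assumes "k \<ge> 9"
  shows "1.8 < qk k \<and> qk k < 2"
proof -
  define f where "f x = x ^ k - (\<Sum>i<k. x ^ i)" for x :: real
  have fe: "f x = x ^ k - (x ^ k - 1) / (x - 1)" if "x \<noteq> 1" for x
    unfolding f_def sum_gp_strict using that by (simp add: field_simps)
  have "(1.8::real) ^ 9 \<le> 1.8 ^ k" by (rule power_increasing) (use assms in auto)
  moreover have "(5::real) < 1.8 ^ 9" by (simp add: power_divide)
  ultimately have p5: "5 < (1.8::real) ^ k" by linarith
  have f18: "f 1.8 < 0" using fe[of "1.8"] p5 by simp
  have f2: "f 2 > 0" using fe[of 2] by simp
  have cont: "continuous_on {1.8..2} f" unfolding f_def by (intro continuous_intros)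
  obtain r where r: "1.8 \<le> r" "r \<le> 2" "f r = 0"
    using IVT'[of f "1.8" 0 2, OF _ _ _ cont] f18 f2 by auto
  have r1: "1.8 < r" "r < 2"
  proof -
    show "1.8 < r" using r(1) r(3) f18 by (cases "r = 1.8") auto
    show "r < 2" using r(2) r(3) f2 by (cases "r = 2") auto
  qed
  have k1: "1 \<le> k" using assms by simp
  have "qk k = r" unfolding qk_def
  proof (rule the_equality)
    show "1 < r \<and> r < 2 \<and> r ^ k - (\<Sum>i<k. r ^ i) = 0" using r r1 f_def by auto
  next
    fix y :: real assume y: "1 < y \<and> y < 2 \<and> y ^ k - (\<Sum>i<k. y ^ i) = 0"
    show "y = r"
    proof (rule ccontr)
      assume "y \<noteq> r"
      then have "y < r \<or> r < y" by auto
      then show False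
        using root_uniq[of y r k] root_uniq[of r y k] y r r1 k1 f_def by auto
    qed
  qed
  then show ?thesis using r1 by simp
qed


lemma proj_bound:
  assumes "1 < (q::real)" "1 < p"
  shows "\<bar>proj q e - proj p e\<bar> \<le> \<bar>q - p\<bar> / ((q - 1) * (p - 1))"
proof (cases "q \<le> p")
  case True
  have "1/(q-1) - 1/(p-1) = \<bar>q - p\<bar> / ((q - 1) * (p - 1))"
    using assms True by (simp add: field_simps)
  then show ?thesis using proj_diff[OF assms(1) True, of e] by simp
next
  case False
  have "1/(p-1) - 1/(q-1) = \<bar>q - p\<bar> / ((q - 1) * (p - 1))"
    using assms False by (simp add: field_simps)
  then show ?thesis using proj_diff[OF assms(2), of q e] False by simp
qed

theorem lemma4p7:
  fixes k :: nat and q :: real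
  assumes "k \<ge> 9"
    and "\<bar>q - qk k\<bar> < 1 / qk k ^ (2 * k + 6)"
  shows "hausdorff_dist (proj q ` Sset (k - 1)) (proj (qk k) ` Sset (k - 1))
           < 1 / qk k ^ (2 * k + 4)"
proof -
  define p where "p = qk k"
  have pb: "1.8 < p" "p < 2" using qk_bounds[OF assms(1)] p_def by auto
  define d where "d = \<bar>q - p\<bar>"
  have dl: "d < 1 / p ^ (2 * k + 6)" using assms(2) p_def d_def by simp
  have "p ^ 8 \<le> p ^ (2 * k + 6)" by (rule power_increasing) (use pb assms(1) in auto)
  moreover have "(1.8::real) ^ 8 \<le> p ^ 8" by (rule power_mono) (use pb in auto)
  moreover have "(100::real) < 1.8 ^ 8" by (simp add: power_divide)
  ultimately have "100 < p ^ (2 * k + 6)" by linarith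
  then have "1 / p ^ (2 * k + 6) < 1 / 100" by (simp add: divide_strict_left_mono)
  then have d1: "d < 1/100" using dl by simp
  have q1: "1.79 < q" using d1 pb unfolding d_def by (simp add: abs_if split: if_splits)
  define D where "D = (q - 1) * (p - 1)"
  have D0: "0.79 * 0.8 \<le> D" unfolding D_def using q1 pb
    by (intro mult_mono) auto
  have pp: "3.24 \<le> p ^ 2" using power_mono[of "1.8" p 2] pb by (simp add: power_divide)
  have "1 \<le> p ^ 2 * D" using mult_mono[OF pp D0] pb by simp
  define M where "M = d / D"
  have Dpos: "0 < D" using D0 by simp
  have ppos: "0 < p ^ (2 * k + 4)" using pb by simp
  have "d < 1 / p ^ (2 * k + 6)" by (rule dl)
  also have "\<dots> = (1 / p ^ 2) / p ^ (2 * k + 4)"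
    by (simp add: power_add[symmetric] mult.commute add.commute)
  also have "\<dots> \<le> D / p ^ (2 * k + 4)"
    apply (rule divide_right_mono)
    using \<open>1 \<le> p ^ 2 * D\<close> pb apply (simp add: field_simps)
    using ppos by simp
  finally have "d < D / p ^ (2 * k + 4)" .
  then have Ml: "M < 1 / p ^ (2 * k + 4)" unfolding M_def using Dpos ppos
    by (simp add: field_simps)
  have bnd: "\<bar>proj q e - proj p e\<bar> \<le> M" for e
    using proj_bound[of q p e] q1 pb unfolding M_def D_def d_def by simp
  have ne: "(\<lambda>_. False) \<in> Sset (k - 1)"
    unfolding Sset_def using assms(1) by auto
  let ?X = "proj q ` Sset (k - 1)" and ?Y = "proj p ` Sset (k - 1)"
  have s1: "(SUP x\<in>?X. infdist x ?Y) \<le> M"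
  proof (rule cSUP_least)
    show "?X \<noteq> {}" using ne by auto
  next
    fix x assume "x \<in> ?X"
    then obtain e where e: "e \<in> Sset (k - 1)" "x = proj q e" by auto
    have "infdist x ?Y \<le> dist x (proj p e)" by (rule infdist_le) (use e in auto)
    also have "\<dots> \<le> M" using bnd[of e] e by (simp add: dist_real_def)
    finally show "infdist x ?Y \<le> M" .
  qed
  have s2: "(SUP y\<in>?Y. infdist y ?X) \<le> M"
  proof (rule cSUP_least)
    show "?Y \<noteq> {}" using ne by auto
  next
    fix y assume "y \<in> ?Y"
    then obtain e where e: "e \<in> Sset (k - 1)" "y = proj p e" by auto
    have "infdist y ?X \<le> dist y (proj q e)" by (rule infdist_le) (use e in auto)
    also have "\<dots> \<le> M" using bnd[of e] e by (simp add: dist_real_def abs_minus_commute)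
    finally show "infdist y ?X \<le> M" .
  qed
  have "hausdorff_dist ?X ?Y \<le> M" unfolding hausdorff_dist_def using s1 s2 by simp
  then show ?thesis using Ml p_def by simp
qed

end
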